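(* Let $t\ge 2q_0+1$ be an integer. For every $s\in H(P_\infty)$ with $s\le t(q+2q_0+1)$ there exists $(a,b,c,d)\in\mathbb{Z}_{\ge0}^4$ with $aq+b(q+q_0)+c(q+2q_0)+d(q+2q_0+1)=s$ and $a+b+c+d\le t$.
   Context: $n\ge2$ is an integer, $q_0=2^n$, $q=2q_0^2$. $H(P_\infty)$ denotes the numerical semigroup generated by $q,\ q+q_0,\ q+2q_0,\ q+2q_0+1$ (this is the Weierstrass semigroup at the point at infinity of the normalization of the Suzuki curve $y^q-y=x^{q_0}(x^q-x)$). *)

theory Defs
  imports Main
begin

definition suz_q0 :: "nat \<Rightarrow> nat" where
  "suz_q0 n = 2 ^ n"

definition suz_q :: "nat \<Rightarrow> nat" where
  "suz_q n = 2 * (suz_q0 n)^2"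

definition suz_H :: "nat \<Rightarrow> nat set" where
  "suz_H n = {s. \<exists>a b c d :: nat.
      a * suz_q n + b * (suz_q n + suz_q0 n) + c * (suz_q n + 2 * suz_q0 n)
      + d * (suz_q n + 2 * suz_q0 n + 1) = s}"

end

theory Submission
  imports Defs
begin

lemma step:
  fixes m N s t u y :: nat
  assumes m: "m \<ge> 1" and h1: "2*y \<le> u" and h2: "u \<le> 2*N"
    and hs: "s = N*(2*m*m) + m*u + y" and tN: "t < N"
    and st: "s \<le> t*(2*m*m+2*m+1)"
  shows "\<exists>u' y'. 2*y' \<le> u' \<and> u' \<le> 2*(N-1) \<and> s = (N-1)*(2*m*m) + m*u' + y'"
proof -
  obtain K where K: "N = Suc K" using tN by (cases N) auto
  have tK: "t \<le> K" using tN K by simp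
  define v where "v = s - K*(2*m*m)"
  have sge: "s \<ge> N*(2*m*m)" using hs by simp
  have vge: "v \<ge> m*(2*m)" using sge K unfolding v_def by (simp add: algebra_simps)
  have "s \<le> K*(2*m*m+2*m+1)" using st tK mult_le_mono1 order_trans by blast
  hence vle: "v \<le> K*(2*m+1)" unfolding v_def by (simp add: algebra_simps)
  have sv: "s = K*(2*m*m) + v" using sge K unfolding v_def by simp
  show ?thesis
  proof (cases "v div m \<le> 2*K")
    case True
    have d1: "2*m \<le> v div m" using vge m
      by (metis div_le_mono mult.commute nonzero_mult_div_cancel_left not_one_le_zero)
    have md: "v mod m < m" using m by simp
    have "2*(v mod m) \<le> v div m" using d1 md by linarith
    moreover have "v = m*(v div m) + v mod m" by simp
    ultimately show ?thesis using True sv K by (intro exI[of _ "v div m"] exI[of _ "v mod m"]) auto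
  next
    case False
    hence "2*K+1 \<le> v div m" by simp
    hence "m*(2*K+1) \<le> v"
      by (metis dual_order.trans div_mult_mod_eq le_add1 mult.commute mult_le_mono2)
    hence ge2: "m*(2*K) \<le> v" by (simp add: algebra_simps)
    define y' where "y' = v - m*(2*K)"
    have "v = m*(2*K) + y'" using ge2 unfolding y'_def by simp
    moreover have "y' \<le> K" using vle unfolding y'_def by (simp add: algebra_simps)
    ultimately show ?thesis using sv K by (intro exI[of _ "2*K"] exI[of _ y']) auto
  qed
qed

lemma descend:
  fixes m s t :: nat
  assumes m: "m \<ge> 1" and st: "s \<le> t*(2*m*m+2*m+1)"
  shows "(\<exists>u y. 2*y \<le> u \<and> u \<le> 2*N \<and> s = N*(2*m*m) + m*u + y) \<Longrightarrow>
    \<exists>N'. N' \<le> t \<and> (\<exists>u y. 2*y \<le> u \<and> u \<le> 2*N' \<and> s = N'*(2*m*m) + m*u + y)"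
proof (induction N)
  case 0
  then show ?case by (intro exI[of _ 0]) auto
next
  case (Suc N)
  show ?case
  proof (cases "Suc N \<le> t")
    case True
    then show ?thesis using Suc.prems by blast
  next
    case False
    from Suc.prems obtain u y where "2*y \<le> u" "u \<le> 2*Suc N" "s = Suc N*(2*m*m) + m*u + y" by blast
    from step[OF m this, of t] False st have "\<exists>u' y'. 2*y' \<le> u' \<and> u' \<le> 2*N \<and> s = N*(2*m*m) + m*u' + y'"
      by simp
    then show ?thesis using Suc.IH by blast
  qed
qed

theorem lemma4p6:
  fixes n t s :: nat
  assumes "n \<ge> 2"
    and "t \<ge> 2 * suz_q0 n + 1"
    and "s \<in> suz_H n"
    and "s \<le> t * (suz_q n + 2 * suz_q0 n + 1)"
  shows "\<exists>a b c d :: nat.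
      a * suz_q n + b * (suz_q n + suz_q0 n) + c * (suz_q n + 2 * suz_q0 n)
      + d * (suz_q n + 2 * suz_q0 n + 1) = s \<and> a + b + c + d \<le> t"
proof -
  define m where "m = suz_q0 n"
  have m: "m \<ge> 1" unfolding m_def suz_q0_def by simp
  have q: "suz_q n = 2*m*m" unfolding m_def suz_q_def by (simp add: power2_eq_square)
  from assms(3) obtain a b c d where abcd:
    "a * (2*m*m) + b * (2*m*m + m) + c * (2*m*m + 2 * m) + d * (2*m*m + 2 * m + 1) = s"
    unfolding suz_H_def q m_def[symmetric] by blast
  have "s = (a+b+c+d)*(2*m*m) + m*(b+2*c+2*d) + d"
    using abcd[symmetric] by (simp add: algebra_simps)
  hence P: "\<exists>u y. 2*y \<le> u \<and> u \<le> 2*(a+b+c+d) \<and> s = (a+b+c+d)*(2*m*m) + m*u + y"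
    by (intro exI[of _ "b+2*c+2*d"] exI[of _ d]) auto
  have st: "s \<le> t*(2*m*m+2*m+1)" using assms(4) unfolding q m_def by simp
  obtain N u y where N: "N \<le> t" "2*y \<le> u" "u \<le> 2*N" "s = N*(2*m*m) + m*u + y"
    using descend[OF m st P] by blast
  define w where "w = u - 2*y"
  define c' where "c' = w div 2"
  define b' where "b' = w mod 2"
  have wle: "w \<le> 2*(N-y)" using N unfolding w_def by simp
  have bc: "b' + c' \<le> N - y" using wle unfolding b'_def c'_def by presburger
  define a' where "a' = N - y - b' - c'"
  have sumN: "a' + b' + c' + y = N" using bc N unfolding a'_def w_def by linarith
  have uu: "u = b' + 2*c' + 2*y" using N unfolding b'_def c'_def w_def by presburger
  have "a' * (2*m*m) + b' * (2*m*m + m) + c' * (2*m*m + 2 * m) + y * (2*m*m + 2 * m + 1)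
      = (a'+b'+c'+y)*(2*m*m) + m*(b'+2*c'+2*y) + y" by (simp add: algebra_simps)
  also have "\<dots> = s" using sumN uu N(4) by simp
  finally show ?thesis unfolding q m_def[symmetric]
    using sumN N(1) by (intro exI[of _ a'] exI[of _ b'] exI[of _ c'] exI[of _ y]) auto
qed

end
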